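(* Let $N\ge 4$ be an integer and $a>0$ real. Let $H=H^{(N)}(a)$ be the real $N\times N$ tridiagonal matrix with $H_{nn}=a+2n-1$, $H_{n,n+1}=-n$, $H_{n+1,n}=-(a+n)$, all other entries zero, and write $D_n(a)=\prod_{j=1}^{n-1}(a+j)$. Then there exists a real symmetric heptadiagonal (bandwidth $3$) $N\times N$ matrix $\mathcal P_3=\mathcal P_3^{(N)}(a)$ with $H^\dagger\mathcal P_3=\mathcal P_3H$ whose entries are $(\mathcal P_3)_{11}=(\mathcal P_3)_{12}=(\mathcal P_3)_{13}=(\mathcal P_3)_{22}=0$, $(\mathcal P_3)_{14}=1$, $$(\mathcal P_3)_{nn}=-\frac{2(n-1)(n-2)\,(n-1)!\,(3a+5n-6)}{3D_n(a)}\quad(n=2,\dots,N-1),$$ $$(\mathcal P_3)_{n,n+1}=\frac{(n-1)\,n!\,(a+5n-7)}{2D_n(a)}\quad(n=2,\dots,N-2),\qquad (\mathcal P_3)_{n,n+2}=-\frac{(n-1)\,(n+1)!}{D_n(a)}\quad(n=2,\dots,N-2),$$ $$(\mathcal P_3)_{n,n+3}=\frac{(n+2)!}{6D_n(a)}\quad(n=2,\dots,N-3),$$ (the remaining entries $(\mathcal P_3)_{N-1,N}=(\mathcal P_3)_{N,N-1}$ and $(\mathcal P_3)_{NN}$ being some real numbers depending on $N$ and $a$). Consequently, with $\Theta_0,\mathcal P_1,\mathcal P_2$ as in the context, for all real $\alpha,\beta,\gamma$ the matrix $\Theta_3=\Theta_0+\alpha\mathcal P_1+\beta\mathcal P_2+\gamma\mathcal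 P_3$ satisfies $H^\dagger\Theta_3=\Theta_3H$, and it is a positive definite metric for $H$ whenever $|\alpha|,|\beta|,|\gamma|$ are sufficiently small.
   Context: $H^\dagger$ is the conjugate transpose. A metric for $H$ is a positive definite Hermitian matrix $\Theta$ with $H^\dagger\Theta=\Theta H$. $\Theta_0$ is the diagonal matrix with $(\Theta_0)_{nn}=(n-1)!/D_n(a)$; $\mathcal P_1$ is the real symmetric tridiagonal matrix with $(\mathcal P_1)_{11}=0$, $(\mathcal P_1)_{nn}=-2(n-1)(n-1)!/D_n(a)$ for $n\ge2$, $(\mathcal P_1)_{n,n+1}=(\mathcal P_1)_{n+1,n}=n!/D_n(a)$; $\mathcal P_2$ is any real symmetric pentadiagonal matrix with $H^\dagger\mathcal P_2=\mathcal P_2H$. All of $\Theta_0,\mathcal P_1,\mathcal P_2$ satisfy $H^\dagger X=XH$. Symmetric entries are understood: $(\mathcal P_3)_{ji}=(\mathcal P_3)_{ij}$. *)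

theory Defs
  imports Complex_Main
begin

text \<open>Real N x N matrices are represented as functions nat \<Rightarrow> nat \<Rightarrow> real,
  with the paper's 1-based indices i, j \<in> {1..N}; values outside this range are irrelevant.\<close>

definition Hmat :: "nat \<Rightarrow> real \<Rightarrow> nat \<Rightarrow> nat \<Rightarrow> real" where
  "Hmat N a i j =
     (if i \<in> {1..N} \<and> j \<in> {1..N} then
        (if j = i then a + 2 * real i - 1
         else if j = i + 1 then - real i
         else if i = j + 1 then - (a + real j)
         else 0)
      else 0)"

definition Dn :: "nat \<Rightarrow> real \<Rightarrow> real" where
  "Dn n a = (\<Prod>j = 1..n - 1. a + real j)"

text \<open>The relation H^dagger X = X H (H real, so H^dagger is the transpose), entrywise.\<close>
definition intertwines :: "nat \<Rightarrow> (nat \<Rightarrow> nat \<Rightarrow> real) \<Rightarrow> (nat \<Rightarrow> nat \<Rightarrow> real) \<Rightarrow> bool" where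
  "intertwines N H X \<longleftrightarrow>
     (\<forall>i\<in>{1..N}. \<forall>j\<in>{1..N}. (\<Sum>k = 1..N. H k i * X k j) = (\<Sum>k = 1..N. X i k * H k j))"

definition sym_mat :: "nat \<Rightarrow> (nat \<Rightarrow> nat \<Rightarrow> real) \<Rightarrow> bool" where
  "sym_mat N X \<longleftrightarrow> (\<forall>i\<in>{1..N}. \<forall>j\<in>{1..N}. X i j = X j i)"

text \<open>Band matrix of bandwidth w: entries with |i - j| > w vanish
  (w = 1 tridiagonal, w = 2 pentadiagonal, w = 3 heptadiagonal).\<close>
definition banded :: "nat \<Rightarrow> nat \<Rightarrow> (nat \<Rightarrow> nat \<Rightarrow> real) \<Rightarrow> bool" where
  "banded N w X \<longleftrightarrow> (\<forall>i\<in>{1..N}. \<forall>j\<in>{1..N}. (i > j + w \<or> j > i + w) \<longrightarrow> X i j = 0)"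

definition pos_def_mat :: "nat \<Rightarrow> (nat \<Rightarrow> nat \<Rightarrow> real) \<Rightarrow> bool" where
  "pos_def_mat N X \<longleftrightarrow> sym_mat N X \<and>
     (\<forall>x :: nat \<Rightarrow> real. (\<exists>i\<in>{1..N}. x i \<noteq> 0) \<longrightarrow>
        (\<Sum>i = 1..N. \<Sum>j = 1..N. x i * X i j * x j) > 0)"

definition is_metric :: "nat \<Rightarrow> (nat \<Rightarrow> nat \<Rightarrow> real) \<Rightarrow> (nat \<Rightarrow> nat \<Rightarrow> real) \<Rightarrow> bool" where
  "is_metric N H X \<longleftrightarrow> pos_def_mat N X \<and> intertwines N H X"

definition Theta0 :: "real \<Rightarrow> nat \<Rightarrow> nat \<Rightarrow> real" where
  "Theta0 a i j = (if i = j then fact (i - 1) / Dn i a else 0)"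

definition P1 :: "real \<Rightarrow> nat \<Rightarrow> nat \<Rightarrow> real" where
  "P1 a i j =
     (if i = j then (if i = 1 then 0 else - 2 * real (i - 1) * fact (i - 1) / Dn i a)
      else if j = i + 1 then fact i / Dn i a
      else if i = j + 1 then fact j / Dn j a
      else 0)"

end

theory Submission
  imports Defs
begin

definition mm :: "nat \<Rightarrow> (nat\<Rightarrow>nat\<Rightarrow>real) \<Rightarrow> (nat\<Rightarrow>nat\<Rightarrow>real) \<Rightarrow> nat\<Rightarrow>nat\<Rightarrow>real" where
 "mm N A B = (\<lambda>i j. \<Sum>k=1..N. A i k * B k j)"

definition trm :: "(nat\<Rightarrow>nat\<Rightarrow>real) \<Rightarrow> nat\<Rightarrow>nat\<Rightarrow>real" where
 "trm A = (\<lambda>i j. A j i)"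

lemma mm_assoc: "mm N (mm N A B) C i j = mm N A (mm N B C) i j"
  unfolding mm_def
  by (simp add: sum_distrib_left sum_distrib_right mult.assoc) (rule sum.swap)

lemma mm_cong_right: "(\<And>k. k\<in>{1..N} \<Longrightarrow> B k j = B' k j) \<Longrightarrow> mm N A B i j = mm N A B' i j"
  unfolding mm_def by (rule sum.cong) auto

lemma mm_cong_left: "(\<And>k. k\<in>{1..N} \<Longrightarrow> A i k = A' i k) \<Longrightarrow> mm N A B i j = mm N A' B i j"
  unfolding mm_def by (rule sum.cong) auto

lemma intertwines_mm: "intertwines N H X \<longleftrightarrow> (\<forall>i\<in>{1..N}. \<forall>j\<in>{1..N}. mm N (trm H) X i j = mm N X H i j)"
  unfolding intertwines_def mm_def trm_def by simp

fun Hp :: "nat \<Rightarrow> real \<Rightarrow> nat \<Rightarrow> nat \<Rightarrow> nat \<Rightarrow> real" where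
  "Hp N a 0 = (\<lambda>i j. if i = j then 1 else 0)"
| "Hp N a (Suc k) = mm N (Hmat N a) (Hp N a k)"

lemma mm_id_left: "i \<in> {1..N} \<Longrightarrow> mm N (\<lambda>i j. if i = j then 1 else 0) B i j = B i j"
proof -
  assume i: "i \<in> {1..N}"
  have "mm N (\<lambda>i j. if i = j then 1 else 0) B i j = (\<Sum>k=1..N. if i = k then B k j else 0)"
    unfolding mm_def by (rule sum.cong) auto
  thus ?thesis using i by simp
qed

lemma mm_id_right: "j \<in> {1..N} \<Longrightarrow> mm N A (\<lambda>i j. if i = j then 1 else 0) i j = A i j"
proof -
  assume j: "j \<in> {1..N}"
  have "mm N A (\<lambda>i j. if i = j then 1 else 0) i j = (\<Sum>k=1..N. if k = j then A i k else 0)"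
    unfolding mm_def by (rule sum.cong) auto
  thus ?thesis using j by simp
qed

lemma Hmat_out: "i \<notin> {1..N} \<or> j \<notin> {1..N} \<Longrightarrow> Hmat N a i j = 0"
  unfolding Hmat_def by auto

lemma Hp1: "Hp N a 1 i j = Hmat N a i j"
proof (cases "j \<in> {1..N}")
  case True thus ?thesis by (simp add: mm_id_right)
next
  case False thus ?thesis by (auto simp: mm_def Hmat_out intro!: sum.neutral)
qed

lemma Hp_comm: "i \<in> {1..N} \<Longrightarrow> j \<in> {1..N} \<Longrightarrow>
   mm N (Hp N a k) (Hmat N a) i j = mm N (Hmat N a) (Hp N a k) i j"
proof (induction k arbitrary: i j)
  case 0
  then show ?case by (simp add: mm_id_left mm_id_right)
next
  case (Suc k)
  have "mm N (Hp N a (Suc k)) (Hmat N a) i j = mm N (Hmat N a) (mm N (Hp N a k) (Hmat N a)) i j"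
    by (simp add: mm_assoc)
  also have "\<dots> = mm N (Hmat N a) (mm N (Hmat N a) (Hp N a k)) i j"
    by (rule mm_cong_right) (use Suc in auto)
  finally show ?case by simp
qed

lemma Dn_pos: "a > 0 \<Longrightarrow> Dn n a > 0"
  unfolding Dn_def by (rule prod_pos) auto

lemma Dn_Suc: "i \<ge> 1 \<Longrightarrow> Dn (Suc i) a = Dn i a * (a + real i)"
  unfolding Dn_def by (cases i) (auto simp: prod.nat_ivl_Suc' mult.commute)

lemma negcancel: "0 < (p::real) \<Longrightarrow> 0 < D \<Longrightarrow> - p * (f / (D * p)) = - f / D"
  by (simp add: field_simps)

lemma negcancel2: "0 < (p::real) \<Longrightarrow> 0 < D \<Longrightarrow> (f / (D * p)) * - p = - f / D"
  by (simp add: field_simps)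

lemma T_int: "a > 0 \<Longrightarrow> i \<in> {1..N} \<Longrightarrow> j \<in> {1..N} \<Longrightarrow>
   mm N (trm (Hmat N a)) (Theta0 a) i j = mm N (Theta0 a) (Hmat N a) i j"
proof -
  assume a: "a > 0" and i: "i \<in> {1..N}" and j: "j \<in> {1..N}"
  have "mm N (trm (Hmat N a)) (Theta0 a) i j = (\<Sum>k=1..N. if k = j then Hmat N a j i * Theta0 a j j else 0)"
    unfolding mm_def trm_def by (rule sum.cong) (auto simp: Theta0_def)
  hence l: "mm N (trm (Hmat N a)) (Theta0 a) i j = Hmat N a j i * Theta0 a j j"
    using j by simp
  have "mm N (Theta0 a) (Hmat N a) i j = (\<Sum>k=1..N. if k = i then Theta0 a i i * Hmat N a i j else 0)"
    unfolding mm_def by (rule sum.cong) (auto simp: Theta0_def)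
  hence r: "mm N (Theta0 a) (Hmat N a) i j = Theta0 a i i * Hmat N a i j"
    using i by simp
  have D: "Dn (Suc i) a = Dn i a * (a + real i)" if "i \<ge> 1" for i
    using that unfolding Dn_def by (cases i) (auto simp: prod.nat_ivl_Suc' mult.commute)
  have "Hmat N a j i * Theta0 a j j = Theta0 a i i * Hmat N a i j"
  proof (cases "j = i + 1 \<or> i = j + 1")
    case True
    then show ?thesis
    proof
      assume ji: "j = i + 1"
      have pi: "a + real i > 0" using a by simp
      have "Hmat N a j i * Theta0 a j j = -(a + real i) * (fact i / (Dn i a * (a + real i)))"
        using ji i j D[of i] by (simp add: Hmat_def Theta0_def)
      also have "\<dots> = - fact i / Dn i a" by (rule negcancel[OF pi Dn_pos[OF a]])
      also have "\<dots> = fact (i - 1) / Dn i a * (- real i)"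
        using fact_reduce[of i, where 'a=real] i by simp
      also have "\<dots> = Theta0 a i i * Hmat N a i j"
        using ji i j by (simp add: Hmat_def Theta0_def)
      finally show ?thesis .
    next
      assume ij: "i = j + 1"
      have pi: "a + real j > 0" using a by simp
      have "Theta0 a i i * Hmat N a i j = (fact j / (Dn j a * (a + real j))) * -(a + real j)"
        using ij i j D[of j] by (simp add: Hmat_def Theta0_def)
      also have "\<dots> = - fact j / Dn j a" by (rule negcancel2[OF pi Dn_pos[OF a]])
      also have "\<dots> = (- real j) * (fact (j - 1) / Dn j a)"
        using fact_reduce[of j, where 'a=real] j ij by simp
      also have "\<dots> = Hmat N a j i * Theta0 a j j"
        using ij i j by (simp add: Hmat_def Theta0_def)
      finally show ?thesis by simp
    qed
  qed (auto simp: Hmat_def Theta0_def)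
  thus ?thesis using l r by simp
qed

definition S :: "nat \<Rightarrow> real \<Rightarrow> nat \<Rightarrow> nat \<Rightarrow> nat \<Rightarrow> real" where
  "S N a k = mm N (Theta0 a) (Hp N a k)"

lemma S_int: assumes a: "a > 0" and i: "i \<in> {1..N}" and j: "j \<in> {1..N}"
  shows "mm N (trm (Hmat N a)) (S N a k) i j = mm N (S N a k) (Hmat N a) i j"
proof -
  have "mm N (trm (Hmat N a)) (S N a k) i j = mm N (mm N (trm (Hmat N a)) (Theta0 a)) (Hp N a k) i j"
    unfolding S_def by (simp add: mm_assoc)
  also have "\<dots> = mm N (mm N (Theta0 a) (Hmat N a)) (Hp N a k) i j"
    by (rule mm_cong_left) (use T_int[OF a i] in auto)
  also have "\<dots> = mm N (Theta0 a) (mm N (Hmat N a) (Hp N a k)) i j"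
    by (simp add: mm_assoc)
  also have "\<dots> = mm N (Theta0 a) (mm N (Hp N a k) (Hmat N a)) i j"
    by (rule mm_cong_right) (use Hp_comm j in auto)
  also have "\<dots> = mm N (S N a k) (Hmat N a) i j"
    unfolding S_def by (simp add: mm_assoc)
  finally show ?thesis .
qed

lemma S_int': "a > 0 \<Longrightarrow> intertwines N (Hmat N a) (S N a k)"
  unfolding intertwines_mm using S_int by blast

lemma S_sym: assumes a: "a > 0" shows "i \<in> {1..N} \<Longrightarrow> j \<in> {1..N} \<Longrightarrow> S N a k i j = S N a k j i"
proof (induction k arbitrary: i j)
  case 0
  then show ?case by (simp add: S_def mm_id_right Theta0_def)
next
  case (Suc k)
  have "S N a (Suc k) i j = mm N (mm N (Theta0 a) (Hmat N a)) (Hp N a k) i j"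
    unfolding S_def by (simp add: mm_assoc)
  also have "\<dots> = mm N (mm N (trm (Hmat N a)) (Theta0 a)) (Hp N a k) i j"
    by (rule mm_cong_left) (use T_int[OF a] Suc.prems in auto)
  also have "\<dots> = mm N (trm (Hmat N a)) (S N a k) i j"
    unfolding S_def by (simp add: mm_assoc)
  also have "\<dots> = mm N (S N a k) (Hmat N a) j i"
    unfolding mm_def trm_def
    by (rule sum.cong) (use Suc in auto)
  also have "\<dots> = mm N (Theta0 a) (mm N (Hp N a k) (Hmat N a)) j i"
    unfolding S_def by (simp add: mm_assoc)
  also have "\<dots> = mm N (Theta0 a) (mm N (Hmat N a) (Hp N a k)) j i"
    by (rule mm_cong_right) (use Hp_comm Suc.prems in auto)
  also have "\<dots> = S N a (Suc k) j i" by (simp add: S_def)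
  finally show ?case .
qed

lemma S_diag: "i \<in> {1..N} \<Longrightarrow> S N a k i j = Theta0 a i i * Hp N a k i j"
proof -
  assume i: "i \<in> {1..N}"
  have "S N a k i j = (\<Sum>l=1..N. if l = i then Theta0 a i i * Hp N a k i j else 0)"
    unfolding S_def mm_def by (rule sum.cong) (auto simp: Theta0_def)
  thus ?thesis using i by simp
qed

lemma H_zero: "Hmat N a i l \<noteq> 0 \<Longrightarrow> l \<le> i + 1 \<and> i \<le> l + 1"
  unfolding Hmat_def by (auto split: if_splits)

lemma Hp_band: "i > j + k \<or> j > i + k \<Longrightarrow> Hp N a k i j = 0"
proof (induction k arbitrary: i j)
  case 0
  then show ?case by auto
next
  case (Suc k)
  have hz: "Hmat N a i l * Hp N a k l j = 0" for l
  proof (cases "Hmat N a i l = 0")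
    case False
    with H_zero have "l \<le> i + 1 \<and> i \<le> l + 1" by blast
    with Suc.prems have "l > j + k \<or> j > l + k" by auto
    with Suc.IH show ?thesis by simp
  qed simp
  show ?case by (simp only: Hp.simps mm_def hz sum.neutral_const)
qed

lemma sumH: assumes i: "i \<in> {1..N}"
  shows "(\<Sum>l=1..N. Hmat N a i l * f l) =
    (if 1 < i then Hmat N a i (i-1) * f (i-1) else 0) + Hmat N a i i * f i +
    (if i < N then Hmat N a i (i+1) * f (i+1) else 0)"
proof -
  let ?T = "{l\<in>{1..N}. i \<le> l + 1 \<and> l \<le> i + 1}"
  have s0: "(\<Sum>l=1..N. Hmat N a i l * f l) = (\<Sum>l\<in>?T. Hmat N a i l * f l)"
    by (rule sum.mono_neutral_right) (auto simp: Hmat_def)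
  show ?thesis
  proof (cases "1 < i")
    case True
    show ?thesis
    proof (cases "i < N")
      case True
      have T: "?T = {i-1, i, i+1}" using \<open>1 < i\<close> True i by auto
      moreover have "i - Suc 0 \<noteq> i" "i - Suc 0 \<noteq> Suc i" using \<open>1 < i\<close> by auto
      ultimately show ?thesis unfolding s0 T using \<open>1 < i\<close> True i by simp
    next
      case False
      have T: "?T = {i-1, i}" using \<open>1 < i\<close> False i by auto
      moreover have "i - Suc 0 \<noteq> i" using \<open>1 < i\<close> by auto
      ultimately show ?thesis unfolding s0 T using \<open>1 < i\<close> False i by simp
    qed
  next
    case False
    show ?thesis
    proof (cases "i < N")
      case True
      have T: "?T = {i, i+1}" using False True i by auto
      show ?thesis unfolding s0 T using False True i by simp
    next
      case F2: False
      have T: "?T = {i}" using False F2 i by auto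
      show ?thesis unfolding s0 T using False F2 i by simp
    qed
  qed
qed

lemma sumH': "Suc 0 \<le> i \<Longrightarrow> i \<le> N \<Longrightarrow> (\<Sum>l=Suc 0..N. Hmat N a i l * f l) =
    (if 1 < i then Hmat N a i (i-1) * f (i-1) else 0) + Hmat N a i i * f i +
    (if i < N then Hmat N a i (i+1) * f (i+1) else 0)"
  using sumH[of i N a f] by simp

lemma Hp1': "Hp N a (Suc 0) i j = Hmat N a i j"
  using Hp1 by simp

lemma Hp0: "Hp N a 0 i j = (if i = j then 1 else 0)" by simp

lemma Hp2: "Hp N a 2 i j = (\<Sum>l=1..N. Hmat N a i l * Hmat N a l j)"
proof -
  have "Hp N a 2 i j = mm N (Hmat N a) (Hp N a (Suc 0)) i j" by (simp only: numeral_2_eq_2 Hp.simps)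
  thus ?thesis by (simp add: mm_def Hp1' del: Hp.simps)
qed

lemma Hp3: "Hp N a 3 i j = (\<Sum>l=1..N. Hmat N a i l * Hp N a 2 l j)"
  by (simp add: numeral_3_eq_3 numeral_2_eq_2 mm_def)

definition P3m :: "nat \<Rightarrow> real \<Rightarrow> nat \<Rightarrow> nat \<Rightarrow> real" where
  "P3m N a i j = (a+1)*(a+2)*(a+3)/6 * S N a 0 i j - (a+2)*(a+3)/2 * S N a 1 i j
      + (a+3)/2 * S N a 2 i j - 1/6 * S N a 3 i j"

lemma P3_entry: "i \<in> {1..N} \<Longrightarrow> P3m N a i j = Theta0 a i i *
   ((a+1)*(a+2)*(a+3)/6 * (if i = j then 1 else 0) - (a+2)*(a+3)/2 * Hmat N a i j
      + (a+3)/2 * Hp N a 2 i j - 1/6 * Hp N a 3 i j)"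
  unfolding P3m_def S_diag by (simp add: Hp1' Hp0 algebra_simps del: Hp.simps)

lemma diag: assumes N: "m + 3 \<le> N" and a: "a > 0"
  shows "P3m N a (m+2) (m+2) = - (2 * real (m+1) * real m * fact (m+1) * (3 * a + 5 * real (m+2) - 6)) / (3 * Dn (m+2) a)"
  apply (subst P3_entry) using N apply simp
  using N apply (simp add: Hp3 Hp2 sumH' del: Hp.simps)
  apply (simp add: Hmat_def Theta0_def)
  using Dn_pos[OF a, of "Suc (Suc m)"] apply (auto simp: field_simps)
  done

lemma up1: assumes N: "m + 4 \<le> N" and a: "a > 0"
  shows "P3m N a (m+2) (m+2+1) = (real (m+1) * fact (m+2) * (a + 5 * real (m+2) - 7)) / (2 * Dn (m+2) a)"
  apply (subst P3_entry) using N apply simp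
  using N apply (simp add: Hp3 Hp2 sumH' del: Hp.simps)
  apply (simp add: Hmat_def Theta0_def)
  using Dn_pos[OF a, of "Suc (Suc m)"] apply (auto simp: field_simps)
  done

lemma up2: assumes N: "m + 4 \<le> N" and a: "a > 0"
  shows "P3m N a (m+2) (m+2+2) = - (real (m+1) * fact (m+2+1)) / Dn (m+2) a"
  apply (subst P3_entry) using N apply simp
  using N apply (simp add: Hp3 Hp2 sumH' del: Hp.simps)
  apply (simp add: Hmat_def Theta0_def)
  using Dn_pos[OF a, of "Suc (Suc m)"] apply (auto simp: field_simps)
  done

lemma up3: assumes N: "m + 5 \<le> N" and a: "a > 0"
  shows "P3m N a (m+2) (m+2+3) = fact (m+2+2) / (6 * Dn (m+2) a)"
  apply (subst P3_entry) using N apply simp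
  using N apply (simp add: Hp3 Hp2 sumH' del: Hp.simps)
  apply (simp add: Hmat_def Theta0_def)
  using Dn_pos[OF a, of "Suc (Suc m)"] apply (auto simp: field_simps)
  done

lemma first: assumes N: "4 \<le> N" and a: "a > 0"
  shows "P3m N a 1 1 = 0 \<and> P3m N a 1 2 = 0 \<and> P3m N a 1 3 = 0 \<and> P3m N a 2 2 = 0 \<and> P3m N a 1 4 = 1"
  using N apply (simp add: P3_entry Hp3 Hp2 sumH' del: Hp.simps)
  apply (simp add: Hmat_def Theta0_def Dn_def numeral_2_eq_2 numeral_3_eq_3)
  apply (auto simp: field_simps)
  done

lemma quad_bound:
  fixes E F :: "nat \<Rightarrow> nat \<Rightarrow> real" and x :: "nat \<Rightarrow> real"
  assumes EF: "\<And>i j. i \<in> {1..N} \<Longrightarrow> j \<in> {1..N} \<Longrightarrow> \<bar>E i j\<bar> \<le> e * F i j"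
    and F0: "\<And>i j. F i j \<ge> 0" and e0: "e \<ge> 0"
  shows "\<bar>\<Sum>i=1..N. \<Sum>j=1..N. x i * E i j * x j\<bar> \<le> e * (\<Sum>i=1..N. \<Sum>j=1..N. F i j) * (\<Sum>i=1..N. (x i)^2)"
proof -
  define S where "S = (\<Sum>i=1..N. (x i)^2)"
  have xi: "(x i)^2 \<le> S" if "i \<in> {1..N}" for i
    unfolding S_def by (rule member_le_sum) (use that in auto)
  have xs: "\<bar>x i\<bar> * \<bar>x j\<bar> \<le> S" if "i \<in> {1..N}" "j \<in> {1..N}" for i j
  proof -
    have "0 \<le> (\<bar>x i\<bar> - \<bar>x j\<bar>)^2" by simp
    hence "2 * (\<bar>x i\<bar> * \<bar>x j\<bar>) \<le> (x i)^2 + (x j)^2" by (simp add: power2_eq_square algebra_simps)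
    with xi[OF that(1)] xi[OF that(2)] show ?thesis by linarith
  qed
  have "\<bar>\<Sum>i=1..N. \<Sum>j=1..N. x i * E i j * x j\<bar> \<le> (\<Sum>i=1..N. \<bar>\<Sum>j=1..N. x i * E i j * x j\<bar>)"
    by (rule sum_abs)
  also have "\<dots> \<le> (\<Sum>i=1..N. \<Sum>j=1..N. \<bar>x i * E i j * x j\<bar>)"
    by (rule sum_mono, rule sum_abs)
  also have "\<dots> \<le> (\<Sum>i=1..N. \<Sum>j=1..N. e * F i j * S)"
  proof (rule sum_mono, rule sum_mono)
    fix i j assume i: "i \<in> {1..N}" and j: "j \<in> {1..N}"
    have "\<bar>x i * E i j * x j\<bar> = \<bar>E i j\<bar> * (\<bar>x i\<bar> * \<bar>x j\<bar>)" by (simp add: abs_mult)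
    also have "\<dots> \<le> (e * F i j) * S"
      by (rule mult_mono) (use EF[OF i j] xs[OF i j] F0 e0 in auto)
    finally show "\<bar>x i * E i j * x j\<bar> \<le> e * F i j * S" .
  qed
  also have "\<dots> = e * (\<Sum>i=1..N. \<Sum>j=1..N. F i j) * S"
    by (simp add: sum_distrib_left sum_distrib_right mult.assoc)
  finally show ?thesis unfolding S_def .
qed

lemma quad_T: "(\<Sum>i=1..N. \<Sum>j=1..N. x i * Theta0 a i j * x j) = (\<Sum>i=1..N. Theta0 a i i * (x i)^2)"
proof (rule sum.cong)
  fix i assume i: "i \<in> {1..N}"
  have "(\<Sum>j=1..N. x i * Theta0 a i j * x j) = (\<Sum>j=1..N. if i = j then Theta0 a i i * (x i)^2 else 0)"
    by (rule sum.cong) (auto simp: Theta0_def power2_eq_square)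
  thus "(\<Sum>j=1..N. x i * Theta0 a i j * x j) = Theta0 a i i * (x i)^2" using i by simp
qed simp

lemma perturb:
  fixes E1 E2 E3 :: "nat \<Rightarrow> nat \<Rightarrow> real"
  assumes a: "a > 0" and N: "N \<ge> 1"
  shows "\<exists>\<epsilon> > 0. \<forall>\<alpha> \<beta> \<gamma> :: real. \<bar>\<alpha>\<bar> < \<epsilon> \<and> \<bar>\<beta>\<bar> < \<epsilon> \<and> \<bar>\<gamma>\<bar> < \<epsilon> \<longrightarrow>
     (\<forall>x :: nat \<Rightarrow> real. (\<exists>i\<in>{1..N}. x i \<noteq> 0) \<longrightarrow>
        (\<Sum>i = 1..N. \<Sum>j = 1..N. x i * (Theta0 a i j + \<alpha> * E1 i j + \<beta> * E2 i j + \<gamma> * E3 i j) * x j) > 0)"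
proof -
  define c where "c = Min ((\<lambda>i. Theta0 a i i) ` {1..N})"
  have Tpos: "Theta0 a i i > 0" for i using Dn_pos[OF a, of i] by (simp add: Theta0_def)
  have c0: "c > 0" unfolding c_def using N Tpos by (subst Min_gr_iff) auto
  have cle: "c \<le> Theta0 a i i" if "i \<in> {1..N}" for i unfolding c_def using that by (intro Min_le) auto
  define F where "F = (\<lambda>i j. \<bar>E1 i j\<bar> + \<bar>E2 i j\<bar> + \<bar>E3 i j\<bar>)"
  define B where "B = (\<Sum>i=1..N. \<Sum>j=1..N. F i j)"
  have F0: "F i j \<ge> 0" for i j unfolding F_def by simp
  have B0: "B \<ge> 0" unfolding B_def by (intro sum_nonneg) (use F0 in auto)
  define \<epsilon> where "\<epsilon> = c / (B + 1)"
  have e0: "\<epsilon> > 0" unfolding \<epsilon>_def using c0 B0 by simp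
  have eB: "\<epsilon> * B < c" unfolding \<epsilon>_def using c0 B0 by (simp add: field_simps)
  show ?thesis
  proof (intro exI[of _ \<epsilon>] conjI allI impI e0)
    fix \<alpha> \<beta> \<gamma> :: real and x :: "nat \<Rightarrow> real"
    assume sm: "\<bar>\<alpha>\<bar> < \<epsilon> \<and> \<bar>\<beta>\<bar> < \<epsilon> \<and> \<bar>\<gamma>\<bar> < \<epsilon>" and nz: "\<exists>i\<in>{1..N}. x i \<noteq> 0"
    define E where "E = (\<lambda>i j. \<alpha> * E1 i j + \<beta> * E2 i j + \<gamma> * E3 i j)"
    define S where "S = (\<Sum>i=1..N. (x i)^2)"
    have S0: "S > 0"
    proof -
      from nz obtain k where k: "k \<in> {1..N}" "x k \<noteq> 0" by blast
      have "(x k)^2 \<le> S" unfolding S_def by (rule member_le_sum) (use k in auto)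
      moreover have "(x k)^2 > 0" using k by simp
      ultimately show ?thesis by linarith
    qed
    have EF: "\<bar>E i j\<bar> \<le> \<epsilon> * F i j" for i j
    proof -
      have "\<bar>E i j\<bar> \<le> \<bar>\<alpha>\<bar> * \<bar>E1 i j\<bar> + \<bar>\<beta>\<bar> * \<bar>E2 i j\<bar> + \<bar>\<gamma>\<bar> * \<bar>E3 i j\<bar>"
        using abs_triangle_ineq[of "\<alpha>*E1 i j + \<beta>*E2 i j" "\<gamma>*E3 i j"] abs_triangle_ineq[of "\<alpha>*E1 i j" "\<beta>*E2 i j"]
        unfolding E_def abs_mult by linarith
      also have "\<dots> \<le> \<epsilon> * \<bar>E1 i j\<bar> + \<epsilon> * \<bar>E2 i j\<bar> + \<epsilon> * \<bar>E3 i j\<bar>"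
        by (intro add_mono mult_right_mono) (use sm in auto)
      finally show ?thesis unfolding F_def by (simp add: algebra_simps)
    qed
    have qb: "\<bar>\<Sum>i=1..N. \<Sum>j=1..N. x i * E i j * x j\<bar> \<le> \<epsilon> * B * S"
      unfolding B_def S_def by (rule quad_bound) (use EF F0 e0 in auto)
    have qT: "(\<Sum>i=1..N. \<Sum>j=1..N. x i * Theta0 a i j * x j) \<ge> c * S"
    proof -
      have "c * S = (\<Sum>i=1..N. c * (x i)^2)" unfolding S_def by (simp add: sum_distrib_left)
      also have "\<dots> \<le> (\<Sum>i=1..N. Theta0 a i i * (x i)^2)"
        by (rule sum_mono, rule mult_right_mono) (use cle in auto)
      finally show ?thesis using quad_T by simp
    qed
    have split: "(\<Sum>i = 1..N. \<Sum>j = 1..N. x i * (Theta0 a i j + \<alpha> * E1 i j + \<beta> * E2 i j + \<gamma> * E3 i j) * x j)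
       = (\<Sum>i=1..N. \<Sum>j=1..N. x i * Theta0 a i j * x j) + (\<Sum>i=1..N. \<Sum>j=1..N. x i * E i j * x j)"
    proof -
      have "(\<Sum>i = 1..N. \<Sum>j = 1..N. x i * (Theta0 a i j + \<alpha> * E1 i j + \<beta> * E2 i j + \<gamma> * E3 i j) * x j)
         = (\<Sum>i = 1..N. (\<Sum>j = 1..N. x i * Theta0 a i j * x j) + (\<Sum>j=1..N. x i * E i j * x j))"
        unfolding sum.distrib[symmetric] E_def by (intro sum.cong refl) (simp add: algebra_simps)
      thus ?thesis by (simp only: sum.distrib)
    qed
    have "\<epsilon> * B * S < c * S" using eB S0 by simp
    thus "(\<Sum>i = 1..N. \<Sum>j = 1..N. x i * (Theta0 a i j + \<alpha> * E1 i j + \<beta> * E2 i j + \<gamma> * E3 i j) * x j) > 0"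
      unfolding split using qb qT by linarith
  qed
qed

lemma int_cong: "(\<And>i j. i \<in> {1..N} \<Longrightarrow> j \<in> {1..N} \<Longrightarrow> X i j = Y i j) \<Longrightarrow>
  intertwines N H X \<Longrightarrow> intertwines N H Y"
proof -
  assume eq: "\<And>i j. i \<in> {1..N} \<Longrightarrow> j \<in> {1..N} \<Longrightarrow> X i j = Y i j" and X: "intertwines N H X"
  show "intertwines N H Y" unfolding intertwines_def
  proof (intro ballI)
    fix i j assume i: "i \<in> {1..N}" and j: "j \<in> {1..N}"
    have "(\<Sum>k = 1..N. H k i * Y k j) = (\<Sum>k = 1..N. H k i * X k j)"
      by (rule sum.cong) (use eq j in auto)
    also have "\<dots> = (\<Sum>k = 1..N. X i k * H k j)" using X i j unfolding intertwines_def by blast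
    also have "\<dots> = (\<Sum>k = 1..N. Y i k * H k j)"
      by (rule sum.cong) (use eq i in auto)
    finally show "(\<Sum>k = 1..N. H k i * Y k j) = (\<Sum>k = 1..N. Y i k * H k j)" .
  qed
qed

lemma int_lin4: assumes "intertwines N H A" "intertwines N H B" "intertwines N H C" "intertwines N H D"
  shows "intertwines N H (\<lambda>i j. A i j + \<alpha> * B i j + \<beta> * C i j + \<gamma> * D i j)"
  unfolding intertwines_def
proof (intro ballI)
  fix i j assume i: "i \<in> {1..N}" and j: "j \<in> {1..N}"
  have e: "\<And>X. intertwines N H X \<Longrightarrow> (\<Sum>k = 1..N. H k i * X k j) = (\<Sum>k = 1..N. X i k * H k j)"
    using i j unfolding intertwines_def by blast
  have "(\<Sum>k = 1..N. H k i * (A k j + \<alpha> * B k j + \<beta> * C k j + \<gamma> * D k j))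
     = (\<Sum>k = 1..N. H k i * A k j) + \<alpha> * (\<Sum>k = 1..N. H k i * B k j) + \<beta> * (\<Sum>k = 1..N. H k i * C k j) + \<gamma> * (\<Sum>k = 1..N. H k i * D k j)"
    by (simp add: sum.distrib sum_distrib_left algebra_simps)
  also have "\<dots> = (\<Sum>k = 1..N. A i k * H k j) + \<alpha> * (\<Sum>k = 1..N. B i k * H k j) + \<beta> * (\<Sum>k = 1..N. C i k * H k j) + \<gamma> * (\<Sum>k = 1..N. D i k * H k j)"
    using e assms by simp
  also have "\<dots> = (\<Sum>k = 1..N. (A i k + \<alpha> * B i k + \<beta> * C i k + \<gamma> * D i k) * H k j)"
    by (simp add: sum.distrib sum_distrib_left algebra_simps)
  finally show "(\<Sum>k = 1..N. H k i * (A k j + \<alpha> * B k j + \<beta> * C k j + \<gamma> * D k j)) =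
         (\<Sum>k = 1..N. (A i k + \<alpha> * B i k + \<beta> * C i k + \<gamma> * D i k) * H k j)" .
qed

lemma int_T: "a > 0 \<Longrightarrow> intertwines N (Hmat N a) (Theta0 a)"
  by (rule int_cong[OF _ S_int'[of a N 0]]) (simp add: S_diag Hp0 Theta0_def)

lemma P1_eq: assumes a: "a > 0" and i: "i \<in> {1..N}" and j: "j \<in> {1..N}"
  shows "(a+1) * S N a 0 i j + (-1) * S N a 1 i j + 0 * S N a 0 i j + 0 * S N a 0 i j = P1 a i j"
proof -
  have L: "(a+1) * S N a 0 i j + (-1) * S N a 1 i j + 0 * S N a 0 i j + 0 * S N a 0 i j
     = Theta0 a i i * ((a+1) * (if i = j then 1 else 0) - Hmat N a i j)"
    using i by (simp add: S_diag Hp0 Hp1' algebra_simps del: Hp.simps)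
  have Dp: "Dn i a > 0" using Dn_pos[OF a] .
  have R: "Theta0 a i i * ((a+1) * (if i = j then 1 else 0) - Hmat N a i j) = P1 a i j"
  proof (cases "i = j")
    case True
    thus ?thesis using i j Dp
      by (cases "i = 1") (auto simp: Hmat_def Theta0_def P1_def of_nat_diff field_simps)
  next
    case False
    show ?thesis
    proof (cases "j = i + 1")
      case True
      thus ?thesis using i j Dp fact_reduce[of i, where 'a=real]
        by (auto simp: Hmat_def Theta0_def P1_def field_simps)
    next
      case F2: False
      show ?thesis
      proof (cases "i = j + 1")
        case True
        have pj: "a + real j > 0" using a by simp
        have "Theta0 a i i * ((a+1) * (if i = j then 1 else 0) - Hmat N a i j)
           = (fact j / (Dn j a * (a + real j))) * (a + real j)"
          using True i j Dn_Suc[of j a] by (simp add: Hmat_def Theta0_def add.commute)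
        also have "\<dots> = fact j / Dn j a" using pj Dn_pos[OF a, of j] by simp
        finally show ?thesis using True by (simp add: P1_def)
      next
        case False
        thus ?thesis using F2 \<open>i \<noteq> j\<close> by (auto simp: Hmat_def P1_def)
      qed
    qed
  qed
  show ?thesis by (rule trans[OF L R])
qed

lemma int_scale: "intertwines N H X \<Longrightarrow> intertwines N H (\<lambda>i j. c * X i j)"
  using int_lin4[of N H X X X X "c - 1" 0 0] by (simp add: algebra_simps)

lemma int_P1: "a > 0 \<Longrightarrow> intertwines N (Hmat N a) (P1 a)"
proof -
  assume a: "a > 0"
  show ?thesis
    by (rule int_cong[OF _ int_lin4[OF int_scale[OF S_int'[OF a, of N 0], of "a+1"] S_int'[OF a, of N 1] S_int'[OF a, of N 0] S_int'[OF a, of N 0],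
      where \<alpha>="-1" and \<beta>=0 and \<gamma>=0]])
     (use P1_eq[OF a] in simp)
qed

lemma int_P3: "a > 0 \<Longrightarrow> intertwines N (Hmat N a) (P3m N a)"
proof -
  assume a: "a > 0"
  have A: "intertwines N (Hmat N a) (\<lambda>i j. (a+1)*(a+2)*(a+3)/6 * S N a 0 i j)"
    using int_lin4[OF S_int'[OF a, of N 0] S_int'[OF a, of N 0] S_int'[OF a, of N 0] S_int'[OF a, of N 0],
      where \<alpha>="(a+1)*(a+2)*(a+3)/6 - 1" and \<beta>=0 and \<gamma>=0]
    by (simp add: algebra_simps)
  show ?thesis
    by (rule int_cong[OF _ int_lin4[OF A S_int'[OF a, of N 1] S_int'[OF a, of N 2] S_int'[OF a, of N 3],
       where \<alpha>="-((a+2)*(a+3)/2)" and \<beta>="(a+3)/2" and \<gamma>="-1/6"]])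
       (simp add: P3m_def)
qed

lemma sym_P3: "a > 0 \<Longrightarrow> sym_mat N (P3m N a)"
  unfolding sym_mat_def P3m_def using S_sym by metis

lemma band_P3: "banded N 3 (P3m N a)"
  unfolding banded_def P3m_def by (auto simp: S_diag Hp_band simp del: Hp.simps)

theorem lemma4:
  fixes N :: nat and a :: real
  assumes "N \<ge> 4" and "a > 0"
  shows "\<exists>P3 :: nat \<Rightarrow> nat \<Rightarrow> real.
    sym_mat N P3 \<and> banded N 3 P3 \<and> intertwines N (Hmat N a) P3 \<and>
    P3 1 1 = 0 \<and> P3 1 2 = 0 \<and> P3 1 3 = 0 \<and> P3 2 2 = 0 \<and> P3 1 4 = 1 \<and>
    (\<forall>n\<in>{2..N-1}. P3 n n =
       - (2 * real (n - 1) * real (n - 2) * fact (n - 1) * (3 * a + 5 * real n - 6)) / (3 * Dn n a)) \<and>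
    (\<forall>n\<in>{2..N-2}. P3 n (n + 1) =
       (real (n - 1) * fact n * (a + 5 * real n - 7)) / (2 * Dn n a)) \<and>
    (\<forall>n\<in>{2..N-2}. P3 n (n + 2) = - (real (n - 1) * fact (n + 1)) / Dn n a) \<and>
    (\<forall>n\<in>{2..N-3}. P3 n (n + 3) = fact (n + 2) / (6 * Dn n a)) \<and>
    (\<forall>P2 :: nat \<Rightarrow> nat \<Rightarrow> real.
       sym_mat N P2 \<and> banded N 2 P2 \<and> intertwines N (Hmat N a) P2 \<longrightarrow>
       (\<forall>\<alpha> \<beta> \<gamma> :: real. intertwines N (Hmat N a)
           (\<lambda>i j. Theta0 a i j + \<alpha> * P1 a i j + \<beta> * P2 i j + \<gamma> * P3 i j)) \<and>
       (\<exists>\<epsilon> > 0. \<forall>\<alpha> \<beta> \<gamma> :: real. \<bar>\<alpha>\<bar> < \<epsilon> \<and> \<bar>\<beta>\<bar> < \<epsilon> \<and> \<bar>\<gamma>\<bar> < \<epsilon> \<longrightarrow>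
           is_metric N (Hmat N a)
             (\<lambda>i j. Theta0 a i j + \<alpha> * P1 a i j + \<beta> * P2 i j + \<gamma> * P3 i j)))"
proof -
  have a: "a > 0" and N: "N \<ge> 4" using assms by auto
  have h1: "\<forall>n\<in>{2..N-1}. P3m N a n n =
       - (2 * real (n - 1) * real (n - 2) * fact (n - 1) * (3 * a + 5 * real n - 6)) / (3 * Dn n a)"
  proof
    fix n assume n: "n \<in> {2..N-1}"
    define m where "m = n - 2"
    have nm: "n = m + 2" and mN: "m + 3 \<le> N" using n N unfolding m_def by auto
    show "P3m N a n n = - (2 * real (n - 1) * real (n - 2) * fact (n - 1) * (3 * a + 5 * real n - 6)) / (3 * Dn n a)"
      using diag[OF mN a] unfolding nm by (simp add: algebra_simps)
  qed
  have h2: "\<forall>n\<in>{2..N-2}. P3m N a n (n + 1) =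
       (real (n - 1) * fact n * (a + 5 * real n - 7)) / (2 * Dn n a)"
  proof
    fix n assume n: "n \<in> {2..N-2}"
    define m where "m = n - 2"
    have nm: "n = m + 2" and mN: "m + 4 \<le> N" using n N unfolding m_def by auto
    show "P3m N a n (n + 1) = (real (n - 1) * fact n * (a + 5 * real n - 7)) / (2 * Dn n a)"
      using up1[OF mN a] unfolding nm by (simp add: algebra_simps)
  qed
  have h3: "\<forall>n\<in>{2..N-2}. P3m N a n (n + 2) = - (real (n - 1) * fact (n + 1)) / Dn n a"
  proof
    fix n assume n: "n \<in> {2..N-2}"
    define m where "m = n - 2"
    have nm: "n = m + 2" and mN: "m + 4 \<le> N" using n N unfolding m_def by auto
    show "P3m N a n (n + 2) = - (real (n - 1) * fact (n + 1)) / Dn n a"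
      using up2[OF mN a] unfolding nm by (simp add: algebra_simps)
  qed
  have h4: "\<forall>n\<in>{2..N-3}. P3m N a n (n + 3) = fact (n + 2) / (6 * Dn n a)"
  proof
    fix n assume n: "n \<in> {2..N-3}"
    define m where "m = n - 2"
    have nm: "n = m + 2" and mN: "m + 5 \<le> N" using n N unfolding m_def by auto
    show "P3m N a n (n + 3) = fact (n + 2) / (6 * Dn n a)"
      using up3[OF mN a] unfolding nm by (simp add: algebra_simps)
  qed
  have symT: "sym_mat N (Theta0 a)" by (simp add: sym_mat_def Theta0_def)
  have symP1: "sym_mat N (P1 a)" by (auto simp: sym_mat_def P1_def)
  have h5: "\<forall>P2 :: nat \<Rightarrow> nat \<Rightarrow> real.
       sym_mat N P2 \<and> banded N 2 P2 \<and> intertwines N (Hmat N a) P2 \<longrightarrow>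
       (\<forall>\<alpha> \<beta> \<gamma> :: real. intertwines N (Hmat N a)
           (\<lambda>i j. Theta0 a i j + \<alpha> * P1 a i j + \<beta> * P2 i j + \<gamma> * P3m N a i j)) \<and>
       (\<exists>\<epsilon> > 0. \<forall>\<alpha> \<beta> \<gamma> :: real. \<bar>\<alpha>\<bar> < \<epsilon> \<and> \<bar>\<beta>\<bar> < \<epsilon> \<and> \<bar>\<gamma>\<bar> < \<epsilon> \<longrightarrow>
           is_metric N (Hmat N a)
             (\<lambda>i j. Theta0 a i j + \<alpha> * P1 a i j + \<beta> * P2 i j + \<gamma> * P3m N a i j))"
  proof (intro allI impI)
    fix P2 :: "nat \<Rightarrow> nat \<Rightarrow> real"
    assume P2: "sym_mat N P2 \<and> banded N 2 P2 \<and> intertwines N (Hmat N a) P2"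
    have I: "intertwines N (Hmat N a) (\<lambda>i j. Theta0 a i j + \<alpha> * P1 a i j + \<beta> * P2 i j + \<gamma> * P3m N a i j)"
      for \<alpha> \<beta> \<gamma>
      by (rule int_lin4[OF int_T[OF a] int_P1[OF a] _ int_P3[OF a]]) (use P2 in blast)
    have Sy: "sym_mat N (\<lambda>i j. Theta0 a i j + \<alpha> * P1 a i j + \<beta> * P2 i j + \<gamma> * P3m N a i j)"
      for \<alpha> \<beta> \<gamma>
      using symT symP1 P2 sym_P3[OF a, of N] unfolding sym_mat_def by simp
    obtain \<epsilon> where e: "\<epsilon> > 0" and pos: "\<forall>\<alpha> \<beta> \<gamma> :: real. \<bar>\<alpha>\<bar> < \<epsilon> \<and> \<bar>\<beta>\<bar> < \<epsilon> \<and> \<bar>\<gamma>\<bar> < \<epsilon> \<longrightarrow>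
     (\<forall>x :: nat \<Rightarrow> real. (\<exists>i\<in>{1..N}. x i \<noteq> 0) \<longrightarrow>
        (\<Sum>i = 1..N. \<Sum>j = 1..N. x i * (Theta0 a i j + \<alpha> * P1 a i j + \<beta> * P2 i j + \<gamma> * P3m N a i j) * x j) > 0)"
      using perturb[OF a, of N "P1 a" P2 "P3m N a"] N by auto
    show "(\<forall>\<alpha> \<beta> \<gamma> :: real. intertwines N (Hmat N a)
           (\<lambda>i j. Theta0 a i j + \<alpha> * P1 a i j + \<beta> * P2 i j + \<gamma> * P3m N a i j)) \<and>
       (\<exists>\<epsilon> > 0. \<forall>\<alpha> \<beta> \<gamma> :: real. \<bar>\<alpha>\<bar> < \<epsilon> \<and> \<bar>\<beta>\<bar> < \<epsilon> \<and> \<bar>\<gamma>\<bar> < \<epsilon> \<longrightarrow>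
           is_metric N (Hmat N a)
             (\<lambda>i j. Theta0 a i j + \<alpha> * P1 a i j + \<beta> * P2 i j + \<gamma> * P3m N a i j))"
      using I Sy e pos unfolding is_metric_def pos_def_mat_def by blast
  qed
  show ?thesis
    apply (rule exI[of _ "P3m N a"])
    using sym_P3[OF a, of N] band_P3[of N a] int_P3[OF a, of N] first[OF N a] h1 h2 h3 h4 h5
    by blast
qed

end
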